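(* Let $\mu,\nu,\rho\in\mathbb{N}$ with $2\rho<\nu$ and $P(\mu+\nu)\le\rho$. Let $\mathcal E$ be the set of pairs $(m,n)\in\{q^{\mu-2},\dots,q^\mu-1\}\times\{q^{\nu-2},\dots,q^\nu-1\}$ for which there exists an integer $0\le k<q^{\mu+\rho}$ with $$f_P(mn+k)\overline{f_P(mn)}\ne f_P^{(\mu+2\rho)}(mn+k)\overline{f_P^{(\mu+2\rho)}(mn)}.$$ Then $\#\mathcal E\ll(\log q)\,q^{\mu+\nu-\rho+P(\mu+\nu+1)}$.
   Context: Fix an integer $q\ge2$. For an integer $n\ge0$, $\varepsilon_i(n)$ is the $i$-th digit of $n$ in base $q$ ($\varepsilon_0$ the units digit). For real $x>0$, $T_q(x)=\lfloor\log x/\log q\rfloor$. $e(x)=\exp(2\pi ix)$. $P:\mathbb{N}\to\mathbb{N}$ is a nondecreasing integer-valued function. For integers $x,y\ge0$, $a_P(x,y)=\sum_{i\ge0}\varepsilon_{i+P(y)}(x)\cdots\varepsilon_i(x)$. Fix $\alpha\in\mathbb{R}$; $f_P(x,y)=e(\alpha a_P(x,y))$ and $f_P(n)=f_P(n,T_q(n))$. For an integer $\rho\ge0$, $f_P^{(\rho)}(x,y)=f_P(x\bmod q^\rho,y)$ and $f_P^{(\rho)}(n)=f_P^{(\rho)}(n,T_q(n))$. The implied constant depends at most on $q$. *)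

theory Defs
  imports Complex_Main
begin

definition digit :: "nat \<Rightarrow> nat \<Rightarrow> nat \<Rightarrow> nat" where
  "digit q i n = (n div q ^ i) mod q"

definition Tq :: "nat \<Rightarrow> nat \<Rightarrow> nat" where
  "Tq q x = nat \<lfloor>ln (real x) / ln (real q)\<rfloor>"

definition e :: "real \<Rightarrow> complex" where
  "e x = exp (2 * of_real pi * \<i> * of_real x)"

text \<open>a_P(x,y) = sum over i >= 0 of digit_{i+P(y)}(x) * ... * digit_i(x);
  the summand is nonzero for only finitely many i, so we sum over its support.\<close>
definition aP :: "nat \<Rightarrow> (nat \<Rightarrow> nat) \<Rightarrow> nat \<Rightarrow> nat \<Rightarrow> nat" where
  "aP q P x y = (\<Sum>i \<in> {i. (\<Prod>j\<le>P y. digit q (i + j) x) \<noteq> 0}.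
                    \<Prod>j\<le>P y. digit q (i + j) x)"

definition fP2 :: "nat \<Rightarrow> real \<Rightarrow> (nat \<Rightarrow> nat) \<Rightarrow> nat \<Rightarrow> nat \<Rightarrow> complex" where
  "fP2 q \<alpha> P x y = e (\<alpha> * real (aP q P x y))"

definition fP :: "nat \<Rightarrow> real \<Rightarrow> (nat \<Rightarrow> nat) \<Rightarrow> nat \<Rightarrow> complex" where
  "fP q \<alpha> P n = fP2 q \<alpha> P n (Tq q n)"

definition fPrho2 :: "nat \<Rightarrow> real \<Rightarrow> (nat \<Rightarrow> nat) \<Rightarrow> nat \<Rightarrow> nat \<Rightarrow> nat \<Rightarrow> complex" where
  "fPrho2 q \<alpha> P \<rho> x y = fP2 q \<alpha> P (x mod q ^ \<rho>) y"

definition fPrho :: "nat \<Rightarrow> real \<Rightarrow> (nat \<Rightarrow> nat) \<Rightarrow> nat \<Rightarrow> nat \<Rightarrow> complex" where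
  "fPrho q \<alpha> P \<rho> n = fPrho2 q \<alpha> P \<rho> n (Tq q n)"

end

theory Submission
  imports Defs
begin


lemma mod_div_pow:
  fixes q x :: nat
  assumes "s \<le> lam" and q: "q > 0"
  shows "(x mod q ^ lam) div q ^ s = (x div q ^ s) mod q ^ (lam - s)"
proof -
  define A where "A = q ^ s"
  define B where "B = q ^ (lam - s)"
  have e: "q ^ lam = A * B" using assms unfolding A_def B_def by (simp add: power_add[symmetric])
  have A0: "A \<noteq> 0" using q by (simp add: A_def)
  have "x mod (A * B) = x mod A + (x div A mod B) * A"
    by (metis mod_mult2_eq add.commute mult.commute)
  then have "(x mod (A * B)) div A = x div A mod B + x mod A div A"
    using div_mult_self1[OF A0] by simp
  also have "x mod A div A = 0" using A0 by simp
  finally show ?thesis unfolding e A_def B_def by simp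
qed

lemma digit_trunc:
  assumes "k < lam" "q > 0"
  shows "digit q k (x mod q ^ lam) = digit q k x"
proof -
  have "(x mod q ^ lam) div q ^ k = (x div q ^ k) mod q ^ (lam - k)"
    using assms by (intro mod_div_pow) auto
  moreover have "q dvd q ^ (lam - k)" using assms by simp
  ultimately show ?thesis unfolding digit_def by (simp add: mod_mod_cancel)
qed

lemma digit_high:
  assumes "s \<le> i" "x div q ^ s = x' div q ^ s"
  shows "digit q i x = digit q i x'"
proof -
  have e: "q ^ i = q ^ s * q ^ (i - s)" using assms by (simp add: power_add[symmetric])
  show ?thesis unfolding digit_def e div_mult2_eq using assms by simp
qed

definition tw :: "nat \<Rightarrow> (nat \<Rightarrow> nat) \<Rightarrow> nat \<Rightarrow> nat \<Rightarrow> nat \<Rightarrow> nat" where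
  "tw q P x y i = (\<Prod>j\<le>P y. digit q (i + j) x)"

lemma aP_sum:
  assumes "q \<ge> 2" "x < q ^ M"
  shows "aP q P x y = (\<Sum>i<M. tw q P x y i)"
proof -
  have sub: "{i. (\<Prod>j\<le>P y. digit q (i + j) x) \<noteq> 0} \<subseteq> {..<M}"
  proof
    fix i assume "i \<in> {i. (\<Prod>j\<le>P y. digit q (i + j) x) \<noteq> 0}"
    then have "\<forall>a\<in>{..P y}. digit q (i+a) x \<noteq> 0" by auto
    then have "digit q (i+0) x \<noteq> 0" by blast
    then have "digit q i x \<noteq> 0" by simp
    then have "x div q ^ i \<noteq> 0" unfolding digit_def by (metis div_0 mod_0)
    then have "q ^ i \<le> x" using assms by (simp add: div_eq_0_iff)
    then have "q ^ i < q ^ M" using assms by linarith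
    then show "i \<in> {..<M}" using assms by (simp add: power_strict_increasing_iff)
  qed
  show ?thesis unfolding aP_def tw_def
    by (rule sum.mono_neutral_left) (use sub in auto)
qed

lemma lt_pow: "q \<ge> 2 \<Longrightarrow> x \<le> M \<Longrightarrow> x < q ^ M"
proof -
  assume a: "q \<ge> 2" "x \<le> M"
  have "x < 2 ^ x" by (rule less_exp)
  also have "2 ^ x \<le> q ^ x" using a by (simp add: power_mono)
  also have "q ^ x \<le> q ^ M" using a by (simp add: power_increasing)
  finally show ?thesis .
qed

lemma aP_diff:
  assumes q: "q \<ge> 2" and "s \<le> lam" and py: "P y + s \<le> lam"
    and xx: "x div q ^ s = x' div q ^ s"
  shows "int (aP q P x y) - int (aP q P (x mod q ^ lam) y)
       = int (aP q P x' y) - int (aP q P (x' mod q ^ lam) y)"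
proof -
  define M where "M = x + x'"
  have b1: "x < q ^ M" "x' < q ^ M" using q by (auto intro!: lt_pow simp: M_def)
  have "x mod q ^ lam \<le> x" "x' mod q ^ lam \<le> x'" by auto
  then have b2: "x mod q ^ lam < q ^ M" "x' mod q ^ lam < q ^ M" using b1 by linarith+
  have xm: "(x mod q ^ lam) div q ^ s = (x' mod q ^ lam) div q ^ s"
  proof -
    have "(x mod q ^ lam) div q ^ s = (x div q ^ s) mod q ^ (lam - s)"
         "(x' mod q ^ lam) div q ^ s = (x' div q ^ s) mod q ^ (lam - s)"
      using assms by (intro mod_div_pow; simp)+
    then show ?thesis using xx by simp
  qed
  have trm: "int (tw q P x y i) - int (tw q P (x mod q ^ lam) y i)
       = int (tw q P x' y i) - int (tw q P (x' mod q ^ lam) y i)" for i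
  proof (cases "i < s")
    case True
    have "tw q P z y i = tw q P (z mod q ^ lam) y i" for z
      unfolding tw_def
      by (rule prod.cong) (use True py q in \<open>auto intro!: digit_trunc[symmetric]\<close>)
    then show ?thesis by simp
  next
    case False
    have "tw q P x y i = tw q P x' y i" unfolding tw_def
      by (rule prod.cong) (use False xx in \<open>auto intro!: digit_high[of s]\<close>)
    moreover have "tw q P (x mod q ^ lam) y i = tw q P (x' mod q ^ lam) y i" unfolding tw_def
      by (rule prod.cong) (use False xm in \<open>auto intro!: digit_high[of s]\<close>)
    ultimately show ?thesis by simp
  qed
  show ?thesis
    using q b1 b2
    by (simp add: aP_sum[of q _ M] of_nat_sum sum_subtractf[symmetric] trm)
qed



lemma Tq_bounds:
  assumes q: "q \<ge> 2" and x: "x \<ge> 1"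
  shows "q ^ Tq q x \<le> x \<and> x < q ^ (Tq q x + 1)"
proof -
  define L where "L = ln (real x) / ln (real q)"
  have lq: "ln (real q) > 0" using q by simp
  have L0: "L \<ge> 0" using x lq by (simp add: L_def)
  have T: "real (Tq q x) = of_int \<lfloor>L\<rfloor>" using L0 by (simp add: Tq_def L_def)
  have a: "real (Tq q x) \<le> L" "L < real (Tq q x) + 1" using T by linarith+
  have "real (Tq q x) * ln (real q) \<le> ln (real x)" using a lq by (simp add: L_def pos_le_divide_eq)
  then have "ln (real q ^ Tq q x) \<le> ln (real x)" using q by (simp add: ln_realpow)
  then have "real q ^ Tq q x \<le> real x" using q x by (subst (asm) ln_le_cancel_iff) auto
  then have 1: "q ^ Tq q x \<le> x" by (metis of_nat_le_iff of_nat_power)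
  have A: "ln (real x) < real (Tq q x + 1) * ln (real q)" using a lq by (simp add: L_def divide_less_eq algebra_simps)
  have B: "ln (real q ^ (Tq q x + 1)) = real (Tq q x + 1) * ln (real q)" using q ln_realpow[of "real q" "Tq q x + 1"] by linarith
  have "ln (real x) < ln (real q ^ (Tq q x + 1))" by (subst B) (rule A)
  moreover have "real x > 0" "real q ^ (Tq q x + 1) > 0" using q x by auto
  ultimately have "real x < real q ^ (Tq q x + 1)" using ln_less_cancel_iff by blast
  then have 2: "x < q ^ (Tq q x + 1)" by (metis of_nat_less_iff of_nat_power)
  show ?thesis using 1 2 by simp
qed

lemma Tq_less:
  assumes q: "q \<ge> 2" and "x < q ^ t" "t > 0"
  shows "Tq q x < t"
proof (cases "x = 0")
  case True then show ?thesis using assms by (simp add: Tq_def)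
next
  case False
  then have "q ^ Tq q x \<le> x" using Tq_bounds q by auto
  then have "q ^ Tq q x < q ^ t" using assms by linarith
  then show ?thesis using q power_less_imp_less_exp[of q "Tq q x" t] by linarith
qed

lemma e_cis: "e a = cis (2 * pi * a)"
  unfolding e_def cis_conv_exp by (simp add: algebra_simps)

lemma e_cnj: "e a * cnj (e b) = e (a - b)"
  unfolding e_cis cis_cnj cis_mult by (simp add: algebra_simps)

lemma Tq_same:
  assumes q: "q \<ge> 2" and s: "q ^ s \<le> N" and d: "N div q ^ s = (N + k) div q ^ s"
  shows "Tq q (N + k) = Tq q N"
proof -
  have qs: "q ^ s > 0" using q by simp
  have b1: "q ^ Tq q N \<le> N" "N < q ^ (Tq q N + 1)" using Tq_bounds[OF q, of N] s qs by auto
  have b2: "q ^ Tq q (N+k) \<le> N + k" "N + k < q ^ (Tq q (N+k) + 1)" using Tq_bounds[OF q, of "N+k"] s qs by auto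
  have "q ^ Tq q N < q ^ (Tq q (N+k) + 1)" using b1 b2 by linarith
  then have le: "Tq q N \<le> Tq q (N+k)" using q power_less_imp_less_exp[of q "Tq q N" "Tq q (N+k) + 1"] by linarith
  show ?thesis
  proof (rule ccontr)
    assume "Tq q (N + k) \<noteq> Tq q N"
    with le have lt: "Tq q N + 1 \<le> Tq q (N+k)" by simp
    define t where "t = Tq q (N+k)"
    have "q ^ (Tq q N + 1) \<le> q ^ t" using lt q unfolding t_def by (intro power_increasing) auto
    then have "N < q ^ t" using b1 by linarith
    have "q ^ s < q ^ t" using \<open>N < q ^ t\<close> s by linarith
    then have "s < t" using q power_less_imp_less_exp[of q s t] by linarith
    then have qt: "q ^ t = q ^ (t - s) * q ^ s" by (simp add: power_add[symmetric])
    define c where "c = q ^ (t - s)"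
    have "c * q ^ s \<le> N + k" using b2 qt unfolding t_def c_def by simp
    then have "c \<le> (N + k) div q ^ s" using qs by (simp add: less_eq_div_iff_mult_less_eq)
    then have "c \<le> N div q ^ s" using d by simp
    then have "c * q ^ s \<le> N" using qs by (simp add: less_eq_div_iff_mult_less_eq)
    moreover have "N < c * q ^ s" using \<open>N < q ^ t\<close> qt c_def by simp
    ultimately show False by simp
  qed
qed

lemma good_eq:
  assumes q: "q \<ge> 2" and g: "N mod q ^ s + k < q ^ s" and sl: "s \<le> lam"
    and py: "P (Tq q (N + k)) + s \<le> lam"
  shows "fP q \<alpha> P (N + k) * cnj (fP q \<alpha> P N)
       = fPrho q \<alpha> P lam (N + k) * cnj (fPrho q \<alpha> P lam N)"
proof (cases "N + k < q ^ lam")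
  case True
  then have "(N + k) mod q ^ lam = N + k" "N mod q ^ lam = N" by auto
  then show ?thesis unfolding fP_def fPrho_def fPrho2_def by simp
next
  case False
  have qs: "q ^ s \<le> q ^ lam" using q sl by (simp add: power_increasing)
  have d: "N div q ^ s = (N + k) div q ^ s"
  proof -
    have "N + k = (N div q ^ s) * q ^ s + (N mod q ^ s + k)" by (metis add.assoc div_mult_mod_eq)
    moreover have "q ^ s \<noteq> 0" using q by simp
    ultimately have "(N + k) div q ^ s = N div q ^ s + (N mod q ^ s + k) div q ^ s"
      by (metis add.commute div_mult_self1)
    then show ?thesis using g by simp
  qed
  have "N div q ^ s \<ge> 1"
  proof (rule ccontr)
    assume "\<not> N div q ^ s \<ge> 1"
    then have "N div q ^ s = 0" by simp
    then have "N < q ^ s" using q by (simp add: div_eq_0_iff)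
    then have "N mod q ^ s = N" by simp
    then show False using g False qs by linarith
  qed
  moreover have "q ^ s > 0" using q by simp
  ultimately have Ns: "q ^ s \<le> N" by (simp add: less_eq_div_iff_mult_less_eq)
  have T: "Tq q (N + k) = Tq q N" by (rule Tq_same[OF q Ns d])
  have D: "int (aP q P (N + k) (Tq q N)) - int (aP q P ((N + k) mod q ^ lam) (Tq q N))
       = int (aP q P N (Tq q N)) - int (aP q P (N mod q ^ lam) (Tq q N))"
    by (rule aP_diff[OF q sl]) (use py T d in auto)
  then have D': "real (aP q P (N + k) (Tq q N)) - real (aP q P N (Tq q N))
      = real (aP q P ((N + k) mod q ^ lam) (Tq q N)) - real (aP q P (N mod q ^ lam) (Tq q N))"
  proof -
    have "real_of_int (int (aP q P (N + k) (Tq q N)) - int (aP q P ((N + k) mod q ^ lam) (Tq q N)))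
       = real_of_int (int (aP q P N (Tq q N)) - int (aP q P (N mod q ^ lam) (Tq q N)))" using D by simp
    then show ?thesis by simp
  qed
  show ?thesis unfolding fP_def fPrho_def fPrho2_def fP2_def T e_cnj
    using D' by (simp add: right_diff_distrib[symmetric])
qed



lemma card_window:
  fixes m h c :: nat
  assumes m: "m > 0"
  shows "card {n. c < m * n + h \<and> m * n < c} \<le> h div m + 1"
proof (cases "{n. c < m * n + h \<and> m * n < c} = {}")
  case True show ?thesis unfolding True by simp
next
  case False
  define S where "S = {n. c < m * n + h \<and> m * n < c}"
  have fin: "finite S"
  proof -
    have "S \<subseteq> {..<c}" unfolding S_def using m
      by auto (metis le_less_trans mult_le_cancel2 mult_1 nat_mult_1 One_nat_def Suc_leI le_trans less_imp_le_nat mult_le_mono1 not_le)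
    then show ?thesis using finite_subset by blast
  qed
  define n0 where "n0 = Min S"
  have n0S: "n0 \<in> S" unfolding n0_def using fin False by (intro Min_in) (auto simp: S_def)
  have "S \<subseteq> {n0..n0 + h div m}"
  proof
    fix n assume nS: "n \<in> S"
    have "n0 \<le> n" using fin nS unfolding n0_def by simp
    have "m * n < m * n0 + h" using nS n0S unfolding S_def by auto
    moreover have "m * n0 \<le> m * n" using \<open>n0 \<le> n\<close> by simp
    ultimately have "m * n - m * n0 < h" by linarith
    then have "m * (n - n0) < h" by (simp add: diff_mult_distrib2)
    then have "n - n0 \<le> h div m" using m by (simp add: less_eq_div_iff_mult_less_eq mult.commute)
    then show "n \<in> {n0..n0 + h div m}" using \<open>n0 \<le> n\<close> by simp
  qed
  then have "card S \<le> card {n0..n0 + h div m}" by (rule card_mono[rotated]) simp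
  then show ?thesis unfolding S_def by simp
qed

lemma card_bad_m:
  fixes m V Q h :: nat
  assumes m: "m > 0" and Q: "Q > 0"
  shows "card {n. n < V \<and> Q < (m * n) mod Q + h} \<le> (m * V div Q + 1) * (h div m + 1)"
proof -
  let ?A = "\<lambda>j. {n. j * Q + Q < m * n + h \<and> m * n < j * Q + Q}"
  have sub: "{n. n < V \<and> Q < (m * n) mod Q + h} \<subseteq> (\<Union>j\<in>{..m * V div Q}. ?A j)"
  proof
    fix n assume n: "n \<in> {n. n < V \<and> Q < (m * n) mod Q + h}"
    define j where "j = m * n div Q"
    have eq: "m * n = j * Q + (m * n) mod Q" unfolding j_def by simp
    have "(m * n) mod Q < Q" using Q by simp
    then have "n \<in> ?A j" using n eq by auto
    moreover have "j \<le> m * V div Q" unfolding j_def using n by (intro div_le_mono) simp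
    ultimately show "n \<in> (\<Union>j\<in>{..m * V div Q}. ?A j)" by auto
  qed
  have fin: "finite (\<Union>j\<in>{..m * V div Q}. ?A j)"
  proof -
    have "?A j \<subseteq> {..<j * Q + Q}" for j using m
      by auto (metis le_less_trans mult_le_cancel2 mult_1 nat_mult_1 One_nat_def Suc_leI le_trans less_imp_le_nat mult_le_mono1 not_le)
    then show ?thesis by (meson finite_UN_I finite_atMost finite_lessThan finite_subset)
  qed
  have "card {n. n < V \<and> Q < (m * n) mod Q + h} \<le> card (\<Union>j\<in>{..m * V div Q}. ?A j)"
    by (rule card_mono[OF fin sub])
  also have "\<dots> \<le> (\<Sum>j\<in>{..m * V div Q}. card (?A j))" by (rule card_UN_le) simp
  also have "\<dots> \<le> (\<Sum>j\<in>{..m * V div Q}. h div m + 1)"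
    by (intro sum_mono card_window m)
  also have "\<dots> = (m * V div Q + 1) * (h div m + 1)" by simp
  finally show ?thesis .
qed



lemma per_m_bound:
  fixes q m X Y R Q h V :: nat
  assumes q: "q \<ge> 2" and m: "m > 0" and Qp: "Q > 0"
    and X: "X = m * V div Q" and Y: "Y = h div m"
    and RQ: "V * h = R * Q" and mV: "m * V \<le> R * Q"
    and hm: "h \<le> m * (q * R)" and R1: "R \<ge> 1"
  shows "(X + 1) * (Y + 1) \<le> (3 + q) * R"
proof -
  have XQ: "X * Q \<le> m * V" unfolding X by (rule div_times_less_eq_dividend)
  have Ym: "Y * m \<le> h" unfolding Y by (rule div_times_less_eq_dividend)
  have "X * Q \<le> R * Q" using XQ mV by linarith
  then have XR: "X \<le> R" using Qp by simp
  have "Y * m \<le> m * (q * R)" using Ym hm by (rule le_trans)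
  then have YR: "Y \<le> q * R" using m by (simp add: mult.commute)
  have "(X * Y) * (Q * m) = (X * Q) * (Y * m)" by (simp add: algebra_simps)
  also have "\<dots> \<le> (m * V) * h" using XQ Ym by (rule mult_le_mono)
  also have "\<dots> = R * (Q * m)" using RQ by (simp add: algebra_simps)
  finally have "X * Y \<le> R" using Qp m by simp
  then have "(X + 1) * (Y + 1) \<le> R + R + q * R + R" using XR YR R1 by (simp add: algebra_simps)
  also have "\<dots> = (3 + q) * R" by (simp add: algebra_simps)
  finally show ?thesis .
qed

theorem mainTheorem9:
  fixes q :: nat
  assumes "q \<ge> 2"
  shows "\<exists>C > 0. \<forall>(\<alpha>::real) (P::nat \<Rightarrow> nat) (\<mu>::nat) (\<nu>::nat) (\<rho>::nat).
    mono P \<longrightarrow> 2 * \<rho> < \<nu> \<longrightarrow> P (\<mu> + \<nu>) \<le> \<rho> \<longrightarrow>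
    real (card {(m, n). q ^ (\<mu> - 2) \<le> m \<and> m \<le> q ^ \<mu> - 1 \<and>
                        q ^ (\<nu> - 2) \<le> n \<and> n \<le> q ^ \<nu> - 1 \<and>
        (\<exists>k < q ^ (\<mu> + \<rho>).
           fP q \<alpha> P (m * n + k) * cnj (fP q \<alpha> P (m * n)) \<noteq>
           fPrho q \<alpha> P (\<mu> + 2 * \<rho>) (m * n + k) * cnj (fPrho q \<alpha> P (\<mu> + 2 * \<rho>) (m * n)))})
    \<le> C * ln (real q) * real q ^ (\<mu> + \<nu> - \<rho> + P (\<mu> + \<nu> + 1))"
proof -
  have q: "q \<ge> 2" by fact
  have lq: "ln (real q) > 0" using q by simp
  define C where "C = (3 + real q) / ln (real q)"
  have Cpos: "C > 0" using lq by (simp add: C_def)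
  show ?thesis
  proof (intro exI[of _ C] conjI allI impI)
    show "C > 0" by fact
    fix \<alpha> :: real and P :: "nat \<Rightarrow> nat" and \<mu> \<nu> \<rho> :: nat
    assume mono: "mono P" and r: "2 * \<rho> < \<nu>" and pr: "P (\<mu> + \<nu>) \<le> \<rho>"
    define p0 where "p0 = P (\<mu> + \<nu>)"
    define lam where "lam = \<mu> + 2 * \<rho>"
    define w where "w = \<rho> - p0"
    define s where "s = \<mu> + \<rho> + w"
    define h where "h = q ^ (\<mu> + \<rho>)"
    define Q where "Q = q ^ s"
    define R where "R = q ^ (\<nu> - w)"
    have wr: "w \<le> \<rho>" by (simp add: w_def)
    have s_lam: "s \<le> lam" "p0 + s = lam" using pr by (auto simp: s_def lam_def w_def p0_def)
    define Ms where "Ms = {q ^ (\<mu> - 2)..q ^ \<mu> - 1}"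
    define Bm where "Bm = (\<lambda>m. {n. n < q ^ \<nu> \<and> Q < (m * n) mod Q + h})"
    let ?E = "{(m, n). q ^ (\<mu> - 2) \<le> m \<and> m \<le> q ^ \<mu> - 1 \<and>
                        q ^ (\<nu> - 2) \<le> n \<and> n \<le> q ^ \<nu> - 1 \<and>
        (\<exists>k < q ^ (\<mu> + \<rho>).
           fP q \<alpha> P (m * n + k) * cnj (fP q \<alpha> P (m * n)) \<noteq>
           fPrho q \<alpha> P (\<mu> + 2 * \<rho>) (m * n + k) * cnj (fPrho q \<alpha> P (\<mu> + 2 * \<rho>) (m * n)))}"
    have qpos: "q ^ j > 0" for j using q by simp
    have sub: "?E \<subseteq> Sigma Ms Bm"
    proof (rule subsetI)
      fix z assume "z \<in> ?E"
      then obtain m n k where z: "z = (m, n)" and mM: "q ^ (\<mu> - 2) \<le> m" "m \<le> q ^ \<mu> - 1"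
        and nb: "n \<le> q ^ \<nu> - 1" and k: "k < q ^ (\<mu> + \<rho>)"
        and ne: "fP q \<alpha> P (m * n + k) * cnj (fP q \<alpha> P (m * n)) \<noteq>
           fPrho q \<alpha> P (\<mu> + 2 * \<rho>) (m * n + k) * cnj (fPrho q \<alpha> P (\<mu> + 2 * \<rho>) (m * n))"
        by blast
      have nlt: "n < q ^ \<nu>" using nb qpos[of \<nu>] by linarith
      have mlt: "m < q ^ \<mu>" using mM qpos[of \<mu>] by linarith
      have bad: "Q < (m * n) mod Q + h"
      proof (rule ccontr)
        assume "\<not> Q < (m * n) mod Q + h"
        then have g: "(m * n) mod q ^ s + k < q ^ s" using k by (simp add: Q_def h_def)
        have "m * n \<le> q ^ \<mu> * q ^ \<nu>" using mlt nlt by (intro mult_le_mono) auto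
        moreover have "k < q ^ \<mu> * q ^ \<nu>"
        proof -
          have "q ^ (\<mu> + \<rho>) \<le> q ^ (\<mu> + \<nu>)" using q r by (intro power_increasing) auto
          then have "k < q ^ (\<mu> + \<nu>)" using k by linarith
          then show ?thesis by (simp add: power_add)
        qed
        moreover have "2 * (q ^ \<mu> * q ^ \<nu>) \<le> q ^ (\<mu> + \<nu> + 1)"
          using q by (simp add: power_add mult.commute)
        ultimately have "m * n + k < q ^ (\<mu> + \<nu> + 1)" by linarith
        then have "Tq q (m * n + k) < \<mu> + \<nu> + 1" by (intro Tq_less q) auto
        then have "P (Tq q (m * n + k)) \<le> p0" using mono unfolding p0_def mono_def by simp
        then have py: "P (Tq q (m * n + k)) + s \<le> lam" using s_lam by linarith
        have "fP q \<alpha> P (m * n + k) * cnj (fP q \<alpha> P (m * n))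
           = fPrho q \<alpha> P lam (m * n + k) * cnj (fPrho q \<alpha> P lam (m * n))"
          by (rule good_eq[where q=q and N="m*n" and s=s and k=k and lam=lam and P=P, OF q g s_lam(1) py])
        with ne show False by (simp add: lam_def)
      qed
      show "z \<in> Sigma Ms Bm" using z mM nlt bad by (simp add: Ms_def Bm_def)
    qed
    have finMs: "finite Ms" by (simp add: Ms_def)
    have finB: "\<forall>m\<in>Ms. finite (Bm m)" by (auto simp: Bm_def)
    have fin: "finite (Sigma Ms Bm)" using finMs finB by auto
    have cardS: "card (Sigma Ms Bm) = (\<Sum>m\<in>Ms. card (Bm m))"
      by (rule card_SigmaI[OF finMs finB])
    have R1: "R \<ge> 1" using q by (simp add: R_def)
    have RQ: "q ^ \<nu> * h = R * Q"
    proof -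
      have "\<nu> + (\<mu> + \<rho>) = (\<nu> - w) + s" using wr r by (simp add: s_def)
      then show ?thesis unfolding R_def Q_def h_def by (metis power_add)
    qed
    have each: "card (Bm m) \<le> (3 + q) * R" if mM: "m \<in> Ms" for m
    proof -
      have m1: "q ^ (\<mu> - 2) \<le> m" "m \<le> q ^ \<mu> - 1" using mM by (auto simp: Ms_def)
      have mpos: "m > 0" using m1 qpos[of "\<mu> - 2"] by linarith
      have mlt: "m \<le> q ^ \<mu>" using m1 by linarith
      have mq2: "q ^ \<mu> \<le> m * q ^ 2"
      proof -
        have "q ^ \<mu> \<le> q ^ (\<mu> - 2 + 2)" using q by (intro power_increasing) auto
        also have "\<dots> = q ^ (\<mu> - 2) * q ^ 2" by (rule power_add)
        also have "\<dots> \<le> m * q ^ 2" using m1 by simp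
        finally show ?thesis .
      qed
      have mV: "m * q ^ \<nu> \<le> R * Q"
      proof -
        have "m * q ^ \<nu> \<le> q ^ \<mu> * q ^ \<nu>" using mlt by simp
        also have "\<dots> \<le> q ^ \<nu> * h" unfolding h_def using q by (simp add: power_add)
        finally show ?thesis using RQ by simp
      qed
      have hm: "h \<le> m * (q * R)"
      proof -
        have "h = q ^ \<mu> * q ^ \<rho>" by (simp add: h_def power_add)
        also have "\<dots> \<le> m * q ^ 2 * q ^ \<rho>" using mq2 by simp
        also have "\<dots> = m * q ^ (\<rho> + 2)" by (simp add: power_add power2_eq_square)
        also have "\<dots> \<le> m * q ^ (\<nu> - w + 1)"
          using q r wr by (intro mult_le_mono2 power_increasing) auto
        also have "\<dots> = m * (q * R)" by (simp add: R_def)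
        finally show ?thesis .
      qed
      have "card (Bm m) \<le> (m * q ^ \<nu> div Q + 1) * (h div m + 1)"
        unfolding Bm_def by (rule card_bad_m[OF mpos]) (use q in \<open>simp add: Q_def\<close>)
      also have "\<dots> \<le> (3 + q) * R"
        by (rule per_m_bound[OF q mpos _ refl refl RQ mV hm R1]) (use q in \<open>simp add: Q_def\<close>)
      finally show ?thesis .
    qed
    have cardMs: "card Ms \<le> q ^ \<mu>"
    proof -
      have "card Ms = Suc (q ^ \<mu> - 1) - q ^ (\<mu> - 2)" by (simp add: Ms_def)
      also have "\<dots> \<le> Suc (q ^ \<mu> - 1)" by (rule diff_le_self)
      also have "Suc (q ^ \<mu> - 1) = q ^ \<mu>" using qpos[of \<mu>] by linarith
      finally show ?thesis .
    qed
    have ex: "\<mu> + (\<nu> - w) = \<mu> + \<nu> - w" using wr r by linarith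
    have pq: "q ^ \<mu> * R = q ^ (\<mu> + \<nu> - w)" unfolding R_def ex[symmetric] by (rule power_add[symmetric])
    have "card ?E \<le> card (Sigma Ms Bm)" by (rule card_mono[OF fin sub])
    also have "\<dots> \<le> card Ms * ((3 + q) * R)"
    proof -
      have "(\<Sum>m\<in>Ms. card (Bm m)) \<le> of_nat (card Ms) * ((3 + q) * R)"
        by (rule sum_bounded_above) (rule each)
      then show ?thesis unfolding cardS by (simp only: of_nat_id)
    qed
    also have "\<dots> \<le> q ^ \<mu> * ((3 + q) * R)" using cardMs by (rule mult_right_mono) simp
    also have "\<dots> = (3 + q) * q ^ (\<mu> + \<nu> - w)"
      by (simp only: mult.left_commute[of "q ^ \<mu>"] pq)
    finally have c0: "card ?E \<le> (3 + q) * q ^ (\<mu> + \<nu> - w)" .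
    then have "real (card ?E) \<le> real ((3 + q) * q ^ (\<mu> + \<nu> - w))" by (rule of_nat_mono)
    then have c1: "real (card ?E) \<le> (3 + real q) * real q ^ (\<mu> + \<nu> - w)" by simp
    have "p0 \<le> P (\<mu> + \<nu> + 1)" using mono unfolding p0_def mono_def by simp
    then have "\<mu> + \<nu> - w \<le> \<mu> + \<nu> - \<rho> + P (\<mu> + \<nu> + 1)" using r by (simp add: w_def)
    then have "real q ^ (\<mu> + \<nu> - w) \<le> real q ^ (\<mu> + \<nu> - \<rho> + P (\<mu> + \<nu> + 1))"
      using q by (intro power_increasing) auto
    then have c2: "(3 + real q) * real q ^ (\<mu> + \<nu> - w) \<le> (3 + real q) * real q ^ (\<mu> + \<nu> - \<rho> + P (\<mu> + \<nu> + 1))"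
      by (intro mult_left_mono) auto
    have eqC: "(3 + real q) = C * ln (real q)" using lq by (simp add: C_def)
    show "real (card ?E) \<le> C * ln (real q) * real q ^ (\<mu> + \<nu> - \<rho> + P (\<mu> + \<nu> + 1))"
      using c1 c2 unfolding eqC by linarith
  qed
qed


end
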